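(* Every search game (as defined in the context) with solitary-search dominant payoffs admits a pure Nash equilibrium that is location-maximizing.
   Context: A search game $G=(N,\Omega,\Pi,\mu,K,c,v)$ consists of: a finite set of players $N=\{1,\ldots,n\}$; a finite set $\Omega$ of locations; for each player $i$ a partition $\Pi_i$ of $\Omega$, with $\pi_i(\omega)$ the cell containing $\omega$; a common prior $\mu\in\Delta(\Omega)$ with $\mu(\pi_i)>0$ for every cell of every player, and $\mu(\omega|\pi_i)=\mu(\omega)/\mu(\pi_i)$ for $\omega\in\pi_i$; capacities $K_i\in\mathbb{N}$; costs $c_i:\{0,\ldots,K_i\}\to\mathbb{R}_{\ge0}$ with $c_i(0)=0$ and nondecreasing increments $c_i(k+1)-c_i(k)\ge c_i(k)-c_i(k-1)$; rewards $v_i^m(\omega)\ge0$ with $v_i^{m+1}(\omega)\le v_i^m(\omega)$; social values $v_{\mathfrak{s}}(\omega)\ge0$. A pure strategy $s_i$ assigns to each cell $\pi_i$ a subset $s_i(\pi_i)\subseteq\pi_i$ of size at most $K_i$; $S$ is the set of pure profiles. With $m_s(\omega)=\sum_{i}\mathbf{1}_{\omega\in s_i(\pi_i(\omega))}$, player $i$'s payoff is $u_i(s)=\sum_{\omega}\mu(\omega)\big[\mathbf{1}_{\omega\in s_i(\pi_i(\omega))}v_i^{m_s(\omega)}(\omega)-c_i(|s_i(\pi_i(\omega))|)\big]$; a pure Nash equilibrium is a pure profile from which no player gains by a unilateral deviation to another pure strategy. A pure profile $s$ is location-maximizing if $\sum_{\omega\in\Omega}\mathbf{1}_{m_s(\omega)\ge1}\ge\sum_{\omega\in\Omega}\mathbf{1}_{m_{s'}(\omega)\ge1}$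 for every $s'\in S$. Payoffs are solitary-search dominant if for every player $i$, every cell $\pi_i\in\Pi_i$ and all $\omega,\omega'\in\pi_i$: $\mu(\omega|\pi_i)v_i^1(\omega)\ge\mu(\omega'|\pi_i)v_i^2(\omega')$ and $\mu(\omega|\pi_i)v_i^1(\omega)\ge c_i(K_i)-c_i(K_i-1)$. *)

theory Defs
  imports Complex_Main "HOL-Library.Disjoint_Sets"
begin

text \<open>Players are the elements of a finite type 'p (N = UNIV), locations the
elements of a finite type 'w (Omega = UNIV).  Each player i has an
information partition P i of the locations.\<close>

definition cell :: "'w set set \<Rightarrow> 'w \<Rightarrow> 'w set" where
  "cell Q \<omega> = (THE C. C \<in> Q \<and> \<omega> \<in> C)"

definition cond_prob :: "('w \<Rightarrow> real) \<Rightarrow> 'w set \<Rightarrow> 'w \<Rightarrow> real" where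
  "cond_prob \<mu> C \<omega> = \<mu> \<omega> / sum \<mu> C"

definition search_game ::
  "('p::finite \<Rightarrow> 'w::finite set set) \<Rightarrow> ('w \<Rightarrow> real) \<Rightarrow> ('p \<Rightarrow> nat)
   \<Rightarrow> ('p \<Rightarrow> nat \<Rightarrow> real) \<Rightarrow> ('p \<Rightarrow> nat \<Rightarrow> 'w \<Rightarrow> real) \<Rightarrow> ('w \<Rightarrow> real) \<Rightarrow> bool" where
  "search_game P \<mu> K c v vs \<longleftrightarrow>
     (\<forall>i. partition_on (UNIV::'w set) (P i)) \<and>
     (\<forall>\<omega>. \<mu> \<omega> \<ge> 0) \<and> (\<Sum>\<omega>\<in>UNIV. \<mu> \<omega>) = 1 \<and>
     (\<forall>i. \<forall>C\<in>P i. sum \<mu> C > 0) \<and>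
     (\<forall>i. c i 0 = 0) \<and>
     (\<forall>i k. k \<le> K i \<longrightarrow> c i k \<ge> 0) \<and>
     (\<forall>i k. 1 \<le> k \<and> k + 1 \<le> K i \<longrightarrow> c i (k + 1) - c i k \<ge> c i k - c i (k - 1)) \<and>
     (\<forall>i m \<omega>. 1 \<le> m \<and> m \<le> card (UNIV::'p set) \<longrightarrow> v i m \<omega> \<ge> 0) \<and>
     (\<forall>i m \<omega>. 1 \<le> m \<and> m < card (UNIV::'p set) \<longrightarrow> v i (m + 1) \<omega> \<le> v i m \<omega>) \<and>
     (\<forall>\<omega>. vs \<omega> \<ge> 0)"

text \<open>A pure strategy of player i: to each cell C of P i a subset of C of size at most K i.
  (Values on sets that are not cells are irrelevant.)\<close>
definition pure_strategy :: "'w set set \<Rightarrow> nat \<Rightarrow> ('w set \<Rightarrow> 'w set) \<Rightarrow> bool" where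
  "pure_strategy Q k si \<longleftrightarrow> (\<forall>C\<in>Q. si C \<subseteq> C \<and> card (si C) \<le> k)"

definition pure_profiles ::
  "('p \<Rightarrow> 'w set set) \<Rightarrow> ('p \<Rightarrow> nat) \<Rightarrow> ('p \<Rightarrow> 'w set \<Rightarrow> 'w set) set" where
  "pure_profiles P K = {s. \<forall>i. pure_strategy (P i) (K i) (s i)}"

definition searched :: "('p \<Rightarrow> 'w set set) \<Rightarrow> ('p \<Rightarrow> 'w set \<Rightarrow> 'w set) \<Rightarrow> 'p \<Rightarrow> 'w \<Rightarrow> bool" where
  "searched P s i \<omega> \<longleftrightarrow> \<omega> \<in> s i (cell (P i) \<omega>)"

definition num_searchers ::
  "('p::finite \<Rightarrow> 'w set set) \<Rightarrow> ('p \<Rightarrow> 'w set \<Rightarrow> 'w set) \<Rightarrow> 'w \<Rightarrow> nat" where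
  "num_searchers P s \<omega> = card {i. searched P s i \<omega>}"

definition payoff ::
  "('p::finite \<Rightarrow> 'w::finite set set) \<Rightarrow> ('w \<Rightarrow> real) \<Rightarrow> ('p \<Rightarrow> nat \<Rightarrow> real)
   \<Rightarrow> ('p \<Rightarrow> nat \<Rightarrow> 'w \<Rightarrow> real) \<Rightarrow> ('p \<Rightarrow> 'w set \<Rightarrow> 'w set) \<Rightarrow> 'p \<Rightarrow> real" where
  "payoff P \<mu> c v s i =
     (\<Sum>\<omega>\<in>UNIV. \<mu> \<omega> * ((if searched P s i \<omega> then v i (num_searchers P s \<omega>) \<omega> else 0)
                          - c i (card (s i (cell (P i) \<omega>)))))"

definition pure_nash ::
  "('p::finite \<Rightarrow> 'w::finite set set) \<Rightarrow> ('w \<Rightarrow> real) \<Rightarrow> ('p \<Rightarrow> nat) \<Rightarrow> ('p \<Rightarrow> nat \<Rightarrow> real)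
   \<Rightarrow> ('p \<Rightarrow> nat \<Rightarrow> 'w \<Rightarrow> real) \<Rightarrow> ('p \<Rightarrow> 'w set \<Rightarrow> 'w set) \<Rightarrow> bool" where
  "pure_nash P \<mu> K c v s \<longleftrightarrow> s \<in> pure_profiles P K \<and>
     (\<forall>i t. pure_strategy (P i) (K i) t \<longrightarrow> payoff P \<mu> c v (s(i := t)) i \<le> payoff P \<mu> c v s i)"

definition location_maximizing ::
  "('p::finite \<Rightarrow> 'w::finite set set) \<Rightarrow> ('p \<Rightarrow> nat) \<Rightarrow> ('p \<Rightarrow> 'w set \<Rightarrow> 'w set) \<Rightarrow> bool" where
  "location_maximizing P K s \<longleftrightarrow> s \<in> pure_profiles P K \<and>
     (\<forall>s'\<in>pure_profiles P K.
        card {\<omega>. num_searchers P s' \<omega> \<ge> 1} \<le> card {\<omega>. num_searchers P s \<omega> \<ge> 1})"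

definition solitary_search_dominant ::
  "('p::finite \<Rightarrow> 'w::finite set set) \<Rightarrow> ('w \<Rightarrow> real) \<Rightarrow> ('p \<Rightarrow> nat) \<Rightarrow> ('p \<Rightarrow> nat \<Rightarrow> real)
   \<Rightarrow> ('p \<Rightarrow> nat \<Rightarrow> 'w \<Rightarrow> real) \<Rightarrow> bool" where
  "solitary_search_dominant P \<mu> K c v \<longleftrightarrow>
     (\<forall>i. \<forall>C\<in>P i. \<forall>\<omega>\<in>C. \<forall>\<omega>'\<in>C.
        cond_prob \<mu> C \<omega> * v i 1 \<omega> \<ge> cond_prob \<mu> C \<omega>' * v i 2 \<omega>' \<and>
        cond_prob \<mu> C \<omega> * v i 1 \<omega> \<ge> c i (K i) - c i (K i - 1))"

end

theory Submission
  imports Defs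
begin


lemma dc_mono:
  fixes c :: "nat \<Rightarrow> real"
  assumes conv: "\<forall>k. 1 \<le> k \<and> k + 1 \<le> K \<longrightarrow> c (k + 1) - c k \<ge> c k - c (k - 1)"
  shows "1 \<le> a \<Longrightarrow> a \<le> b \<Longrightarrow> b \<le> K \<Longrightarrow> c a - c (a - 1) \<le> c b - c (b - 1)"
proof (induction b)
  case 0 then show ?case by simp
next
  case (Suc b)
  show ?case
  proof (cases "a = Suc b")
    case True then show ?thesis by simp
  next
    case False
    then have "a \<le> b" using Suc by simp
    then have "c a - c (a - 1) \<le> c b - c (b - 1)" using Suc by simp
    moreover have "c (b + 1) - c b \<ge> c b - c (b - 1)" using conv Suc \<open>a \<le> b\<close> by auto
    ultimately show ?thesis by simp
  qed
qed

lemma conv1: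
  fixes c :: "nat \<Rightarrow> real"
  assumes conv: "\<forall>k. 1 \<le> k \<and> k + 1 \<le> K \<longrightarrow> c (k + 1) - c k \<ge> c k - c (k - 1)"
    and "1 \<le> k" "k \<le> K"
  shows "d \<le> k \<Longrightarrow> c k - c (k - d) \<le> real d * (c k - c (k - 1))"
proof (induction d)
  case 0 then show ?case by simp
next
  case (Suc d)
  have IH: "c k - c (k - d) \<le> real d * (c k - c (k - 1))" using Suc by simp
  have "c (k - d) - c (k - d - 1) \<le> c k - c (k - 1)"
    using dc_mono[OF conv, of "k - d" k] Suc assms(2,3) by simp
  moreover have "c (k - Suc d) = c (k - d - 1)" by simp
  moreover have "real (Suc d) * (c k - c (k - 1)) = real d * (c k - c (k - 1)) + (c k - c (k - 1))"
    by (simp add: distrib_right)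
  ultimately show ?case using IH by linarith
qed

lemma conv1':
  fixes c :: "nat \<Rightarrow> real"
  assumes conv: "\<forall>k. 1 \<le> k \<and> k + 1 \<le> K \<longrightarrow> c (k + 1) - c k \<ge> c k - c (k - 1)"
    and "1 \<le> k" "k \<le> K" "j \<le> k"
  shows "c k - c j \<le> real (k - j) * (c k - c (k - 1))"
  using conv1[OF conv assms(2,3), of "k - j"] assms by simp

lemma conv2:
  fixes c :: "nat \<Rightarrow> real"
  assumes conv: "\<forall>k. 1 \<le> k \<and> k + 1 \<le> K \<longrightarrow> c (k + 1) - c k \<ge> c k - c (k - 1)"
  shows "k < k' \<Longrightarrow> k' \<le> K \<Longrightarrow> real (k' - k) * (c (k + 1) - c k) \<le> c k' - c k"
proof (induction k')
  case 0 then show ?case by simp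
next
  case (Suc k')
  show ?case
  proof (cases "k' = k")
    case True then show ?thesis by simp
  next
    case False
    then have "k < k'" using Suc by simp
    then have IH: "real (k' - k) * (c (k + 1) - c k) \<le> c k' - c k" using Suc by simp
    have "c (k + 1) - c (k + 1 - 1) \<le> c (Suc k') - c (Suc k' - 1)"
      using dc_mono[OF conv, of "k+1" "Suc k'"] Suc \<open>k < k'\<close> by simp
    then have "c (k + 1) - c k \<le> c (Suc k') - c k'" by simp
    moreover have "real (Suc k' - k) * (c (k + 1) - c k) = real (k' - k) * (c (k + 1) - c k) + (c (k + 1) - c k)"
      using \<open>k < k'\<close> by (simp add: Suc_diff_le distrib_right)
    ultimately show ?thesis using IH by linarith
  qed
qed

lemma best_resp:
  fixes c :: "nat \<Rightarrow> real" and val :: "'w \<Rightarrow> real"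
  assumes conv: "\<forall>k. 1 \<le> k \<and> k + 1 \<le> K \<longrightarrow> c (k + 1) - c k \<ge> c k - c (k - 1)"
    and fin: "finite C" and TC: "T \<subseteq> C" and TK: "card T \<le> K"
    and E1: "\<forall>x\<in>T. \<forall>y\<in>C - T. val y \<le> val x"
    and E2: "card T < K \<longrightarrow> (\<forall>y\<in>C - T. val y \<le> c (card T + 1) - c (card T))"
    and E3: "\<forall>x\<in>T. c (card T) - c (card T - 1) \<le> val x"
    and T'C: "T' \<subseteq> C" and T'K: "card T' \<le> K"
  shows "sum val T' - c (card T') \<le> sum val T - c (card T)"
proof -
  define I where "I = T \<inter> T'"
  define Pp where "Pp = T - T'"
  define Q where "Q = T' - T"
  have finT: "finite T" "finite T'" using fin TC T'C finite_subset by auto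
  have sT: "sum val T = sum val I + sum val Pp"
    unfolding I_def Pp_def using finT sum.Int_Diff by blast
  have sT': "sum val T' = sum val I + sum val Q"
    unfolding I_def Q_def using finT sum.Int_Diff[of T' val T] by (simp add: Int_commute)
  have cT: "card T = card I + card Pp"
    unfolding I_def Pp_def using finT card_Int_Diff by blast
  have cT': "card T' = card I + card Q"
    unfolding I_def Q_def using finT card_Int_Diff[of T' T] by (simp add: Int_commute)
  have QP: "\<forall>y\<in>Q. \<forall>x\<in>Pp. val y \<le> val x" using E1 T'C unfolding Q_def Pp_def by blast
  have finPQ: "finite Pp" "finite Q" unfolding Pp_def Q_def using finT by auto
  show ?thesis
  proof (cases "card Q \<le> card Pp")
    case True
    show ?thesis
    proof (cases "Pp = {}")
      case True
      then have "Q = {}" using \<open>card Q \<le> card Pp\<close> finPQ by simp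
      then show ?thesis using sT sT' cT cT' True by simp
    next
      case False
      define t where "t = Min (val ` Pp)"
      have tP: "\<forall>x\<in>Pp. t \<le> val x" unfolding t_def using finPQ by simp
      have tin: "t \<in> val ` Pp" unfolding t_def using finPQ False by simp
      have tQ: "\<forall>y\<in>Q. val y \<le> t" using QP tin by auto
      have "card Pp > 0" using False finPQ by auto
      then have "1 \<le> card T" using cT by simp
      have td: "c (card T) - c (card T - 1) \<le> t" using E3 tin unfolding Pp_def by auto
      have s1: "sum val Q \<le> real (card Q) * t" using sum_bounded_above[of Q val t] tQ by simp
      have s2: "real (card Pp) * t \<le> sum val Pp" using sum_bounded_below[of Pp t val] tP by simp
      have le: "card T' \<le> card T" using cT cT' True by linarith
      have c1: "c (card T) - c (card T') \<le> real (card T - card T') * (c (card T) - c (card T - 1))"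
        by (rule conv1'[OF conv \<open>1 \<le> card T\<close> TK le])
      have eq: "real (card T - card T') = real (card Pp) - real (card Q)" using cT cT' True by simp
      have "real (card T - card T') * (c (card T) - c (card T - 1)) \<le> real (card T - card T') * t"
        by (rule mult_left_mono[OF td]) (rule of_nat_0_le_iff)
      also have "\<dots> = real (card Pp) * t - real (card Q) * t"
        by (simp only: eq left_diff_distrib)
      finally have m: "real (card T - card T') * (c (card T) - c (card T - 1)) \<le> real (card Pp) * t - real (card Q) * t" .
      from s1 s2 c1 sT sT' m show ?thesis by linarith
    qed
  next
    case False
    then have "Q \<noteq> {}" by auto
    define t where "t = Max (val ` Q)"
    have tQ: "\<forall>y\<in>Q. val y \<le> t" unfolding t_def using finPQ by simp
    have tin: "t \<in> val ` Q" unfolding t_def using finPQ \<open>Q \<noteq> {}\<close> by simp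
    have tP: "\<forall>x\<in>Pp. t \<le> val x" using QP tin by auto
    have lt: "card T < card T'" using False cT cT' by simp
    then have "card T < K" using T'K by simp
    have td: "t \<le> c (card T + 1) - c (card T)" using E2 \<open>card T < K\<close> tin T'C unfolding Q_def by auto
    have s1: "sum val Q \<le> real (card Q) * t" using sum_bounded_above[of Q val t] tQ by simp
    have s2: "real (card Pp) * t \<le> sum val Pp" using sum_bounded_below[of Pp t val] tP by simp
    have c2: "real (card T' - card T) * (c (card T + 1) - c (card T)) \<le> c (card T') - c (card T)"
      using conv2[OF conv lt T'K] .
    have eq: "real (card T' - card T) = real (card Q) - real (card Pp)" using cT cT' False by simp
    have "real (card Q) * t - real (card Pp) * t = real (card T' - card T) * t"
      by (simp only: eq left_diff_distrib)
    also have "\<dots> \<le> real (card T' - card T) * (c (card T + 1) - c (card T))"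
      by (rule mult_left_mono[OF td]) (rule of_nat_0_le_iff)
    finally have m: "real (card Q) * t - real (card Pp) * t \<le> real (card T' - card T) * (c (card T + 1) - c (card T))" .
    from s1 s2 c2 sT sT' m show ?thesis by linarith
  qed
qed



locale sg =
  fixes P :: "'p::finite \<Rightarrow> 'w::finite set set" and \<mu> :: "'w \<Rightarrow> real" and K :: "'p \<Rightarrow> nat"
    and c :: "'p \<Rightarrow> nat \<Rightarrow> real" and v :: "'p \<Rightarrow> nat \<Rightarrow> 'w \<Rightarrow> real" and vs :: "'w \<Rightarrow> real"
  assumes game: "search_game P \<mu> K c v vs"
    and ssd: "solitary_search_dominant P \<mu> K c v"
begin

lemma part: "partition_on (UNIV::'w set) (P i)" using game unfolding search_game_def by blast
lemma mu_nonneg: "\<mu> \<omega> \<ge> 0" using game unfolding search_game_def by blast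
lemma cell_pos: "C \<in> P i \<Longrightarrow> sum \<mu> C > 0" using game unfolding search_game_def by blast
lemma conv: "\<forall>k. 1 \<le> k \<and> k + 1 \<le> K i \<longrightarrow> c i (k + 1) - c i k \<ge> c i k - c i (k - 1)"
  using game unfolding search_game_def by blast
lemma vmono: "1 \<le> m \<Longrightarrow> m < card (UNIV :: 'p set) \<Longrightarrow> v i (m + 1) \<omega> \<le> v i m \<omega>"
  using game unfolding search_game_def by blast
lemma N_pos: "card (UNIV :: 'p set) \<ge> 1"
proof -
  have "card (UNIV :: 'p set) > 0" by (simp add: card_gt_0_iff)
  then show ?thesis by simp
qed

lemma cell_unique: assumes "C \<in> P i" "\<omega> \<in> C" shows "cell (P i) \<omega> = C"
proof -
  have d: "disjoint (P i)" using partition_onD2[OF part] .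
  show ?thesis unfolding cell_def
  proof (rule the_equality)
    show "C \<in> P i \<and> \<omega> \<in> C" using assms by simp
  next
    fix C' assume "C' \<in> P i \<and> \<omega> \<in> C'"
    then show "C' = C" using d assms unfolding disjoint_def by blast
  qed
qed

lemma cell_ex: "\<exists>C\<in>P i. \<omega> \<in> C"
proof -
  have "(UNIV::'w set) = \<Union>(P i)" using partition_onD1[OF part] .
  then show ?thesis by blast
qed

lemma cell_in: "cell (P i) \<omega> \<in> P i" and in_cell: "\<omega> \<in> cell (P i) \<omega>"
  using cell_ex[of i \<omega>] cell_unique by auto

lemma finite_P: "finite (P i)" by simp
lemma finite_C: "finite (C :: 'w set)" by simp

definition oth :: "('p \<Rightarrow> 'w set \<Rightarrow> 'w set) \<Rightarrow> 'p \<Rightarrow> 'w \<Rightarrow> nat" where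
  "oth s i \<omega> = card {j. j \<noteq> i \<and> searched P s j \<omega>}"

abbreviation cnt where "cnt s \<omega> \<equiv> num_searchers P s \<omega>"

definition val :: "'p \<Rightarrow> 'w \<Rightarrow> nat \<Rightarrow> real" where
  "val i \<omega> m = cond_prob \<mu> (cell (P i) \<omega>) \<omega> * v i m \<omega>"

definition dc :: "'p \<Rightarrow> nat \<Rightarrow> real" where
  "dc i k = c i k - c i (k - 1)"

lemma cnt_oth: "cnt s \<omega> = oth s i \<omega> + (if searched P s i \<omega> then 1 else 0)"
proof -
  have e: "{j. searched P s j \<omega>} = {j. j \<noteq> i \<and> searched P s j \<omega>} \<union> (if searched P s i \<omega> then {i} else {})"
    by auto
  show ?thesis unfolding num_searchers_def oth_def e
    by (simp add: card_Un_disjoint)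
qed

lemma oth_le: "oth s i \<omega> \<le> card (UNIV :: 'p set) - 1"
proof -
  have "{j. j \<noteq> i \<and> searched P s j \<omega>} \<subseteq> UNIV - {i}" by blast
  moreover have "finite (UNIV - {i} :: 'p set)" by simp
  ultimately have "oth s i \<omega> \<le> card (UNIV - {i} :: 'p set)" unfolding oth_def using card_mono by blast
  moreover have "card (UNIV - {i} :: 'p set) = card (UNIV :: 'p set) - 1"
    using card_Diff_singleton[of i "UNIV :: 'p set"] by simp
  ultimately show ?thesis by simp
qed

lemma searched_upd_other: "j \<noteq> i \<Longrightarrow> searched P (s(i := t)) j \<omega> = searched P s j \<omega>"
  unfolding searched_def by simp

lemma oth_upd: "oth (s(i := t)) i \<omega> = oth s i \<omega>"
  unfolding oth_def using searched_upd_other by metis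

lemma searched_in: "C \<in> P i \<Longrightarrow> x \<in> C \<Longrightarrow> searched P s i x \<longleftrightarrow> x \<in> s i C"
  unfolding searched_def using cell_unique by simp

lemma cond_nonneg: "cond_prob \<mu> C \<omega> \<ge> 0"
  unfolding cond_prob_def using mu_nonneg by (simp add: sum_nonneg)

lemma val_mono: "1 \<le> m \<Longrightarrow> m < card (UNIV :: 'p set) \<Longrightarrow> val i \<omega> (m + 1) \<le> val i \<omega> m"
  unfolding val_def using vmono cond_nonneg by (simp add: mult_left_mono)

definition happy :: "('p \<Rightarrow> 'w set \<Rightarrow> 'w set) \<Rightarrow> 'p \<Rightarrow> 'w set \<Rightarrow> nat \<Rightarrow> bool" where
  "happy s i C rr \<longleftrightarrow>
     (\<forall>x\<in>s i C. \<forall>y\<in>C - s i C. val i y (oth s i y + 1) \<le> val i x (oth s i x + 1)) \<and>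
     (card (s i C) < rr \<longrightarrow> (\<forall>y\<in>C - s i C. val i y (oth s i y + 1) \<le> dc i (card (s i C) + 1))) \<and>
     (\<forall>x\<in>s i C. dc i (card (s i C)) \<le> val i x (oth s i x + 1))"

definition eqr :: "('p \<Rightarrow> 'w set \<Rightarrow> nat) \<Rightarrow> ('p \<Rightarrow> 'w set \<Rightarrow> 'w set) \<Rightarrow> bool" where
  "eqr r s \<longleftrightarrow> (\<forall>i. \<forall>C\<in>P i. s i C \<subseteq> C \<and> card (s i C) \<le> r i C \<and> r i C \<le> K i \<and> happy s i C (r i C))"

definition agent_inv where
  "agent_inv r n0 Ol s i C \<longleftrightarrow> s i C \<subseteq> C \<and> card (s i C) \<le> r i C \<and> r i C \<le> K i \<and> Ol i C \<subseteq> s i C \<and>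
     (\<forall>x\<in>Ol i C. \<forall>y\<in>C - s i C. val i y (n0 y + 1) \<le> val i x (n0 x)) \<and>
     (\<forall>x\<in>s i C - Ol i C. n0 x < card (UNIV :: 'p set) \<and> (\<forall>y\<in>C - s i C. val i y (n0 y + 1) \<le> val i x (n0 x + 1))) \<and>
     (\<forall>x\<in>Ol i C. dc i (card (s i C)) \<le> val i x (n0 x)) \<and>
     (\<forall>x\<in>s i C - Ol i C. dc i (card (s i C)) \<le> val i x (n0 x + 1)) \<and>
     (card (s i C) < r i C \<longrightarrow> (\<forall>y\<in>C - s i C. val i y (n0 y + 1) \<le> dc i (card (s i C) + 1)))"

definition inv where
  "inv r n0 Ol h s \<longleftrightarrow> (\<forall>\<omega>. cnt s \<omega> = n0 \<omega> + (if h = Some \<omega> then 1 else 0)) \<and>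
     (\<forall>i. \<forall>C\<in>P i. agent_inv r n0 Ol s i C)"

lemma happy_crit:
  assumes I: "inv r n0 Ol h s" and CP: "C \<in> P i"
    and hot: "\<And>hh. h = Some hh \<Longrightarrow> hh \<in> Ol i C \<Longrightarrow>
        (\<forall>y\<in>C - s i C. val i y (n0 y + 1) \<le> val i hh (n0 hh + 1)) \<and> dc i (card (s i C)) \<le> val i hh (n0 hh + 1)"
  shows "happy s i C (r i C)"
proof -
  have A: "agent_inv r n0 Ol s i C" using I CP unfolding inv_def by blast
  have cn: "\<And>\<omega>. cnt s \<omega> = n0 \<omega> + (if h = Some \<omega> then 1 else 0)" using I unfolding inv_def by blast
  have sub: "s i C \<subseteq> C" using A unfolding agent_inv_def by blast
  define k where "k = card (s i C)"
  have join: "val i y (oth s i y + 1) \<le> val i y (n0 y + 1)" if y: "y \<in> C - s i C" for y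
  proof -
    have ns: "\<not> searched P s i y" using searched_in[OF CP] y by blast
    have o: "oth s i y = n0 y + (if h = Some y then 1 else 0)" using cnt_oth[of s y i] cn[of y] ns by simp
    show ?thesis
    proof (cases "h = Some y")
      case True
      then have o1: "oth s i y = n0 y + 1" using o by simp
      then have "n0 y + 1 < card (UNIV :: 'p set)" using oth_le[of s i y] N_pos by linarith
      then have "val i y (n0 y + 1 + 1) \<le> val i y (n0 y + 1)" by (intro val_mono) auto
      then show ?thesis using o1 by simp
    next
      case False then show ?thesis using o by simp
    qed
  qed
  have cur: "(\<forall>y\<in>C - s i C. val i y (n0 y + 1) \<le> val i x (oth s i x + 1)) \<and> dc i k \<le> val i x (oth s i x + 1)"
    if x: "x \<in> s i C" for x
  proof -
    have xs: "searched P s i x" using searched_in[OF CP] x sub by blast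
    have o: "oth s i x + 1 = n0 x + (if h = Some x then 1 else 0)" using cnt_oth[of s x i] cn[of x] xs by simp
    show ?thesis
    proof (cases "x \<in> Ol i C")
      case True
      show ?thesis
      proof (cases "h = Some x")
        case True
        then show ?thesis using hot[OF True \<open>x \<in> Ol i C\<close>] o unfolding k_def by simp
      next
        case False
        then show ?thesis using A True o unfolding agent_inv_def k_def by simp
      qed
    next
      case notO: False
      have a1: "\<forall>y\<in>C - s i C. val i y (n0 y + 1) \<le> val i x (n0 x + 1)" and a2: "n0 x < card (UNIV :: 'p set)"
        and a3: "dc i k \<le> val i x (n0 x + 1)"
        using A x notO unfolding agent_inv_def k_def by blast+
      show ?thesis
      proof (cases "h = Some x")
        case True
        then show ?thesis using a1 a3 o by simp
      next
        case False
        then have o2: "oth s i x + 1 = n0 x" using o by simp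
        then have "1 \<le> n0 x" by simp
        then have m: "val i x (n0 x + 1) \<le> val i x (n0 x)" using a2 val_mono by blast
        have "\<forall>y\<in>C - s i C. val i y (n0 y + 1) \<le> val i x (n0 x)" using a1 m by (meson order_trans)
        moreover have "dc i k \<le> val i x (n0 x)" using a3 m by linarith
        ultimately show ?thesis unfolding o2 by blast
      qed
    qed
  qed
  have E2: "card (s i C) < r i C \<longrightarrow> (\<forall>y\<in>C - s i C. val i y (n0 y + 1) \<le> dc i (card (s i C) + 1))"
    using A unfolding agent_inv_def by blast
  show ?thesis unfolding happy_def
  proof (intro conjI ballI impI)
    fix x y assume "x \<in> s i C" "y \<in> C - s i C"
    then have "val i y (oth s i y + 1) \<le> val i y (n0 y + 1)" "val i y (n0 y + 1) \<le> val i x (oth s i x + 1)"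
      using join cur by blast+
    then show "val i y (oth s i y + 1) \<le> val i x (oth s i x + 1)" by linarith
  next
    fix y assume "card (s i C) < r i C" "y \<in> C - s i C"
    then have "val i y (oth s i y + 1) \<le> val i y (n0 y + 1)" "val i y (n0 y + 1) \<le> dc i (card (s i C) + 1)"
      using join E2 by blast+
    then show "val i y (oth s i y + 1) \<le> dc i (card (s i C) + 1)" by linarith
  next
    fix x assume "x \<in> s i C"
    then show "dc i (card (s i C)) \<le> val i x (oth s i x + 1)" using cur unfolding k_def by blast
  qed
qed

end



context sg
begin

definition ainv where
  "ainv rr n0 i C T Ol \<longleftrightarrow> T \<subseteq> C \<and> card T \<le> rr \<and> rr \<le> K i \<and> Ol \<subseteq> T \<and>
     (\<forall>x\<in>Ol. \<forall>y\<in>C - T. val i y (n0 y + 1) \<le> val i x (n0 x)) \<and>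
     (\<forall>x\<in>T - Ol. n0 x < card (UNIV :: 'p set) \<and> (\<forall>y\<in>C - T. val i y (n0 y + 1) \<le> val i x (n0 x + 1))) \<and>
     (\<forall>x\<in>Ol. dc i (card T) \<le> val i x (n0 x)) \<and>
     (\<forall>x\<in>T - Ol. dc i (card T) \<le> val i x (n0 x + 1)) \<and>
     (card T < rr \<longrightarrow> (\<forall>y\<in>C - T. val i y (n0 y + 1) \<le> dc i (card T + 1)))"

lemma agent_inv_ainv: "agent_inv r n0 Ol s i C = ainv (r i C) n0 i C (s i C) (Ol i C)"
  unfolding agent_inv_def ainv_def by simp

lemma dc_le: "1 \<le> a \<Longrightarrow> a \<le> b \<Longrightarrow> b \<le> K i \<Longrightarrow> dc i a \<le> dc i b"
  unfolding dc_def using dc_mono[OF conv[of i]] by blast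

lemma swap_ainv:
  assumes A: "ainv rr n0 i C T Ol" and hO: "hh \<in> Ol" and uY: "u \<in> C - T"
    and umax: "\<forall>y\<in>C - T. val i y (n0 y + 1) \<le> val i u (n0 u + 1)"
    and du: "dc i (card T) \<le> val i u (n0 u + 1)"
    and hu: "val i hh (n0 hh + 1) < val i u (n0 u + 1)"
    and nu: "n0 u < card (UNIV :: 'p set)"
  shows "ainv rr n0 i C (insert u (T - {hh})) (Ol - {hh})"
proof -
  have TC: "T \<subseteq> C" and ck: "card T \<le> rr" and rK: "rr \<le> K i" and OT: "Ol \<subseteq> T"
    and I1: "\<forall>x\<in>Ol. \<forall>y\<in>C - T. val i y (n0 y + 1) \<le> val i x (n0 x)"
    and I2: "\<forall>x\<in>T - Ol. n0 x < card (UNIV :: 'p set) \<and> (\<forall>y\<in>C - T. val i y (n0 y + 1) \<le> val i x (n0 x + 1))"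
    and I3a: "\<forall>x\<in>Ol. dc i (card T) \<le> val i x (n0 x)"
    and I3b: "\<forall>x\<in>T - Ol. dc i (card T) \<le> val i x (n0 x + 1)"
    and I4: "card T < rr \<longrightarrow> (\<forall>y\<in>C - T. val i y (n0 y + 1) \<le> dc i (card T + 1))"
    using A unfolding ainv_def by blast+
  define T' where "T' = insert u (T - {hh})"
  have hT: "hh \<in> T" using hO OT by blast
  have finT: "finite T" by simp
  have cT': "card T' = card T"
  proof -
    have "u \<notin> T - {hh}" using uY by blast
    then have "card T' = Suc (card (T - {hh}))" unfolding T'_def by simp
    also have "\<dots> = card T" using hT finT card_Diff1_less[OF finT hT] card_Diff_singleton[OF hT] by simp
    finally show ?thesis .
  qed
  have Ymem: "y = hh \<or> (y \<in> C - T \<and> y \<noteq> u)" if "y \<in> C - T'" for y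
    using that unfolding T'_def by blast
  have Amem: "x = u \<or> x \<in> T - Ol" if "x \<in> T' - (Ol - {hh})" for x
    using that unfolding T'_def by blast
  have "T' \<subseteq> C" unfolding T'_def using TC uY hT by blast
  moreover have "card T' \<le> rr" using cT' ck by simp
  moreover have "Ol - {hh} \<subseteq> T'" unfolding T'_def using OT by blast
  moreover have "\<forall>x\<in>Ol - {hh}. \<forall>y\<in>C - T'. val i y (n0 y + 1) \<le> val i x (n0 x)"
  proof (intro ballI)
    fix x y assume x: "x \<in> Ol - {hh}" and y: "y \<in> C - T'"
    have xu: "val i u (n0 u + 1) \<le> val i x (n0 x)" using I1 x uY by blast
    show "val i y (n0 y + 1) \<le> val i x (n0 x)"
      using Ymem[OF y] proof
      assume "y = hh" then show ?thesis using hu xu by simp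
    next
      assume "y \<in> C - T \<and> y \<noteq> u" then show ?thesis using I1 x by blast
    qed
  qed
  moreover have "\<forall>x\<in>T' - (Ol - {hh}). n0 x < card (UNIV :: 'p set) \<and> (\<forall>y\<in>C - T'. val i y (n0 y + 1) \<le> val i x (n0 x + 1))"
  proof (intro ballI conjI)
    fix x assume x: "x \<in> T' - (Ol - {hh})"
    show "n0 x < card (UNIV :: 'p set)" using Amem[OF x] I2 nu by blast
    fix y assume y: "y \<in> C - T'"
    show "val i y (n0 y + 1) \<le> val i x (n0 x + 1)"
      using Amem[OF x] proof
      assume xu: "x = u"
      show ?thesis using Ymem[OF y] proof
        assume "y = hh" then show ?thesis using hu xu by simp
      next
        assume "y \<in> C - T \<and> y \<noteq> u" then show ?thesis using umax xu by blast
      qed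
    next
      assume xA: "x \<in> T - Ol"
      have xu: "val i u (n0 u + 1) \<le> val i x (n0 x + 1)" using I2 xA uY by blast
      show ?thesis using Ymem[OF y] proof
        assume "y = hh" then show ?thesis using hu xu by simp
      next
        assume "y \<in> C - T \<and> y \<noteq> u" then show ?thesis using I2 xA by blast
      qed
    qed
  qed
  moreover have "\<forall>x\<in>Ol - {hh}. dc i (card T') \<le> val i x (n0 x)" using I3a cT' by simp
  moreover have "\<forall>x\<in>T' - (Ol - {hh}). dc i (card T') \<le> val i x (n0 x + 1)"
  proof
    fix x assume x: "x \<in> T' - (Ol - {hh})"
    show "dc i (card T') \<le> val i x (n0 x + 1)" using Amem[OF x] I3b du cT' by auto
  qed
  moreover have "card T' < rr \<longrightarrow> (\<forall>y\<in>C - T'. val i y (n0 y + 1) \<le> dc i (card T' + 1))"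
  proof (intro impI ballI)
    fix y assume lt: "card T' < rr" and y: "y \<in> C - T'"
    have ud: "val i u (n0 u + 1) \<le> dc i (card T + 1)" using I4 lt cT' uY by simp
    show "val i y (n0 y + 1) \<le> dc i (card T' + 1)"
      using Ymem[OF y] proof
      assume "y = hh" then show ?thesis using hu ud cT' by simp
    next
      assume "y \<in> C - T \<and> y \<noteq> u" then show ?thesis using I4 lt cT' by simp
    qed
  qed
  ultimately show ?thesis unfolding ainv_def T'_def[symmetric] using rK by blast
qed

lemma drop_ainv:
  assumes A: "ainv rr n0 i C T Ol" and hO: "hh \<in> Ol"
    and a: "val i hh (n0 hh + 1) < dc i (card T)"
    and b: "\<forall>y\<in>C - T. val i y (n0 y + 1) \<le> dc i (card T)"
  shows "ainv rr n0 i C (T - {hh}) (Ol - {hh})"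
proof -
  have TC: "T \<subseteq> C" and ck: "card T \<le> rr" and rK: "rr \<le> K i" and OT: "Ol \<subseteq> T"
    and I1: "\<forall>x\<in>Ol. \<forall>y\<in>C - T. val i y (n0 y + 1) \<le> val i x (n0 x)"
    and I2: "\<forall>x\<in>T - Ol. n0 x < card (UNIV :: 'p set) \<and> (\<forall>y\<in>C - T. val i y (n0 y + 1) \<le> val i x (n0 x + 1))"
    and I3a: "\<forall>x\<in>Ol. dc i (card T) \<le> val i x (n0 x)"
    and I3b: "\<forall>x\<in>T - Ol. dc i (card T) \<le> val i x (n0 x + 1)"
    using A unfolding ainv_def by blast+
  define T' where "T' = T - {hh}"
  have hT: "hh \<in> T" using hO OT by blast
  have finT: "finite T" by simp
  have cT': "card T' = card T - 1" unfolding T'_def using card_Diff_singleton[OF hT] .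
  have k1: "1 \<le> card T" using hT finT by (simp add: Suc_le_eq card_gt_0_iff) blast
  have dcm: "dc i (card T') \<le> dc i (card T)" if "T' \<noteq> {}"
  proof -
    have "card T' \<noteq> 0" using that by simp
    then show ?thesis using dc_le[of "card T'" "card T" i] cT' ck rK by simp
  qed
  have Ymem: "y = hh \<or> y \<in> C - T" if "y \<in> C - T'" for y
    using that unfolding T'_def by blast
  have "T' \<subseteq> C" unfolding T'_def using TC by blast
  moreover have "card T' \<le> rr" using cT' ck by simp
  moreover have "Ol - {hh} \<subseteq> T'" unfolding T'_def using OT by blast
  moreover have "\<forall>x\<in>Ol - {hh}. \<forall>y\<in>C - T'. val i y (n0 y + 1) \<le> val i x (n0 x)"
  proof (intro ballI)
    fix x y assume x: "x \<in> Ol - {hh}" and y: "y \<in> C - T'"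
    show "val i y (n0 y + 1) \<le> val i x (n0 x)"
      using Ymem[OF y] proof
      assume "y = hh" then show ?thesis using a I3a x by force
    next
      assume "y \<in> C - T" then show ?thesis using I1 x by blast
    qed
  qed
  moreover have "\<forall>x\<in>T' - (Ol - {hh}). n0 x < card (UNIV :: 'p set) \<and> (\<forall>y\<in>C - T'. val i y (n0 y + 1) \<le> val i x (n0 x + 1))"
  proof (intro ballI conjI)
    fix x assume x: "x \<in> T' - (Ol - {hh})"
    then have xA: "x \<in> T - Ol" unfolding T'_def by blast
    show "n0 x < card (UNIV :: 'p set)" using xA I2 by blast
    fix y assume y: "y \<in> C - T'"
    show "val i y (n0 y + 1) \<le> val i x (n0 x + 1)"
      using Ymem[OF y] proof
      assume "y = hh" then show ?thesis using a I3b xA by force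
    next
      assume "y \<in> C - T" then show ?thesis using I2 xA by blast
    qed
  qed
  moreover have "\<forall>x\<in>Ol - {hh}. dc i (card T') \<le> val i x (n0 x)"
  proof
    fix x assume x: "x \<in> Ol - {hh}"
    then have "T' \<noteq> {}" using OT unfolding T'_def by blast
    then show "dc i (card T') \<le> val i x (n0 x)" using dcm I3a x by force
  qed
  moreover have "\<forall>x\<in>T' - (Ol - {hh}). dc i (card T') \<le> val i x (n0 x + 1)"
  proof
    fix x assume x: "x \<in> T' - (Ol - {hh})"
    then have "T' \<noteq> {}" by blast
    moreover have "x \<in> T - Ol" using x unfolding T'_def by blast
    ultimately show "dc i (card T') \<le> val i x (n0 x + 1)" using dcm I3b by force
  qed
  moreover have "card T' < rr \<longrightarrow> (\<forall>y\<in>C - T'. val i y (n0 y + 1) \<le> dc i (card T' + 1))"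
  proof (intro impI ballI)
    fix y assume y: "y \<in> C - T'"
    have e: "card T' + 1 = card T" using cT' k1 by simp
    show "val i y (n0 y + 1) \<le> dc i (card T' + 1)"
      using Ymem[OF y] proof
      assume "y = hh" then show ?thesis using a e by simp
    next
      assume "y \<in> C - T" then show ?thesis using b e by simp
    qed
  qed
  ultimately show ?thesis unfolding ainv_def T'_def[symmetric] using rK by blast
qed

end



context sg
begin

definition msr :: "('p \<Rightarrow> 'w set \<Rightarrow> 'w set) \<Rightarrow> nat" where
  "msr Ol = (\<Sum>i\<in>UNIV. \<Sum>C\<in>P i. card (Ol i C))"

lemma msr_dec:
  assumes CP: "C \<in> P i" and hO: "hh \<in> Ol i C"
  shows "msr (Ol(i := (Ol i)(C := Ol i C - {hh}))) < msr Ol"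
  unfolding msr_def
proof (rule sum_strict_mono_ex1)
  show "finite (UNIV :: 'p set)" by simp
  let ?O' = "Ol(i := (Ol i)(C := Ol i C - {hh}))"
  have inner: "(\<Sum>C'\<in>P i. card (?O' i C')) < (\<Sum>C'\<in>P i. card (Ol i C'))"
  proof (rule sum_strict_mono_ex1)
    show "finite (P i)" by simp
    show "\<forall>x\<in>P i. card (?O' i x) \<le> card (Ol i x)" by (simp add: card_mono)
    show "\<exists>a\<in>P i. card (?O' i a) < card (Ol i a)"
      using CP hO card_Diff1_less[of "Ol i C" hh] by auto
  qed
  show "\<forall>j\<in>UNIV. (\<Sum>C'\<in>P j. card (?O' j C')) \<le> (\<Sum>C'\<in>P j. card (Ol j C'))"
    using inner by (auto intro: less_imp_le)
  show "\<exists>j\<in>UNIV. (\<Sum>C'\<in>P j. card (?O' j C')) < (\<Sum>C'\<in>P j. card (Ol j C'))"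
    using inner by blast
qed

lemma searched_upd_self:
  assumes "C \<in> P i"
  shows "searched P (s(i := (s i)(C := T'))) i \<omega> = (if \<omega> \<in> C then \<omega> \<in> T' else searched P s i \<omega>)"
proof (cases "\<omega> \<in> C")
  case True
  then show ?thesis unfolding searched_def using cell_unique[OF assms True] by simp
next
  case False
  then have "cell (P i) \<omega> \<noteq> C" using in_cell[of \<omega> i] by blast
  then show ?thesis unfolding searched_def using False by simp
qed

lemma cnt_upd: "cnt (s(i := t)) \<omega> = oth s i \<omega> + (if searched P (s(i := t)) i \<omega> then 1 else 0)"
  using cnt_oth[of "s(i := t)" \<omega> i] oth_upd by simp

lemma inv_upd:
  assumes I: "inv r n0 Ol h s" and CP: "C \<in> P i"
    and A: "ainv (r i C) n0 i C T' O'"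
    and cn: "\<forall>\<omega>. cnt (s(i := (s i)(C := T'))) \<omega> = n0 \<omega> + (if h' = Some \<omega> then 1 else 0)"
  shows "inv r n0 (Ol(i := (Ol i)(C := O'))) h' (s(i := (s i)(C := T')))"
  unfolding inv_def
proof (intro conjI allI ballI)
  fix \<omega> show "cnt (s(i := (s i)(C := T'))) \<omega> = n0 \<omega> + (if h' = Some \<omega> then 1 else 0)" using cn by blast
next
  fix j C' assume C': "C' \<in> P j"
  show "agent_inv r n0 (Ol(i := (Ol i)(C := O'))) (s(i := (s i)(C := T'))) j C'"
  proof (cases "j = i \<and> C' = C")
    case True then show ?thesis using A unfolding agent_inv_ainv by simp
  next
    case False
    have "agent_inv r n0 Ol s j C'" using I C' unfolding inv_def by blast
    then show ?thesis using False unfolding agent_inv_ainv by auto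
  qed
qed

lemma step:
  assumes I: "inv r n0 Ol (Some hh) s" and CP: "C \<in> P i" and hO: "hh \<in> Ol i C"
    and nc: "\<not> ((\<forall>y\<in>C - s i C. val i y (n0 y + 1) \<le> val i hh (n0 hh + 1)) \<and> dc i (card (s i C)) \<le> val i hh (n0 hh + 1))"
  shows "\<exists>Ol' h' s'. inv r n0 Ol' h' s' \<and> msr Ol' < msr Ol"
proof -
  define T where "T = s i C"
  define J where "J y = val i y (n0 y + 1)" for y
  define k where "k = card T"
  have A: "ainv (r i C) n0 i C T (Ol i C)" using I CP unfolding inv_def agent_inv_ainv T_def by blast
  have TC: "T \<subseteq> C" and OT: "Ol i C \<subseteq> T" using A unfolding ainv_def by blast+
  have hT: "hh \<in> T" using hO OT by blast
  have cn: "\<And>\<omega>. cnt s \<omega> = n0 \<omega> + (if Some hh = Some \<omega> then 1 else 0)" using I unfolding inv_def by blast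
  have sr: "\<And>\<omega>. \<omega> \<in> C \<Longrightarrow> searched P s i \<omega> = (\<omega> \<in> T)" using searched_in[OF CP] unfolding T_def by blast
  have nc': "\<not> ((\<forall>y\<in>C - T. J y \<le> J hh) \<and> dc i k \<le> J hh)" using nc unfolding J_def k_def T_def .
  have mdec: "msr (Ol(i := (Ol i)(C := Ol i C - {hh}))) < msr Ol" using msr_dec[of C i hh Ol, OF CP hO] .
  show ?thesis
  proof (cases "\<exists>u\<in>C - T. (\<forall>y\<in>C - T. J y \<le> J u) \<and> dc i k \<le> J u \<and> J hh < J u")
    case True
    then obtain u where uY: "u \<in> C - T" and umax: "\<forall>y\<in>C - T. J y \<le> J u" and du: "dc i k \<le> J u"
      and hu: "J hh < J u" by blast
    have uh: "u \<noteq> hh" using uY hT by blast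
    have nsu: "\<not> searched P s i u" using sr uY by blast
    have nu: "n0 u < card (UNIV :: 'p set)"
    proof -
      have "cnt s u = oth s i u" using cnt_oth[of s u i] nsu by simp
      moreover have "cnt s u = n0 u" using cn[of u] uh by simp
      ultimately show ?thesis using oth_le[of s i u] N_pos by linarith
    qed
    have A': "ainv (r i C) n0 i C (insert u (T - {hh})) (Ol i C - {hh})"
      using swap_ainv[OF A hO uY _ _ _ nu] umax du hu unfolding J_def k_def by blast
    have cn': "\<forall>\<omega>. cnt (s(i := (s i)(C := insert u (T - {hh})))) \<omega> = n0 \<omega> + (if Some u = Some \<omega> then 1 else 0)"
    proof
      fix \<omega>
      have e1: "cnt s \<omega> = oth s i \<omega> + (if searched P s i \<omega> then 1 else 0)" using cnt_oth .
      have e3: "cnt (s(i := (s i)(C := insert u (T - {hh})))) \<omega> = oth s i \<omega> +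
          (if (if \<omega> \<in> C then \<omega> \<in> insert u (T - {hh}) else searched P s i \<omega>) then 1 else 0)"
        using cnt_upd searched_upd_self[OF CP] by simp
      show "cnt (s(i := (s i)(C := insert u (T - {hh})))) \<omega> = n0 \<omega> + (if Some u = Some \<omega> then 1 else 0)"
      proof (cases "\<omega> \<in> C")
        case True
        then have "searched P s i \<omega> = (\<omega> \<in> T)" using sr by blast
        then show ?thesis using e1 e3 cn[of \<omega>] True uh hT uY by (cases "\<omega> = hh"; cases "\<omega> = u"; auto)
      next
        case False
        then have "\<omega> \<noteq> hh" "\<omega> \<noteq> u" using hT TC uY by auto
        then show ?thesis using e1 e3 cn[of \<omega>] False by simp
      qed
    qed
    have "inv r n0 (Ol(i := (Ol i)(C := Ol i C - {hh}))) (Some u) (s(i := (s i)(C := insert u (T - {hh}))))"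
      using inv_upd[OF I CP A' cn'] .
    then show ?thesis using mdec by blast
  next
    case False
    have ab: "J hh < dc i k \<and> (\<forall>y\<in>C - T. J y \<le> dc i k)"
    proof (cases "C - T = {}")
      case True
      then show ?thesis using nc' by auto
    next
      case ne: False
      have "finite (J ` (C - T))" by simp
      then obtain u where uY: "u \<in> C - T" and umax: "\<forall>y\<in>C - T. J y \<le> J u"
        using ne Max_in[of "J ` (C - T)"] Max_ge[of "J ` (C - T)"] by (metis (no_types, lifting) image_iff image_is_empty)
      have nu: "\<not> (dc i k \<le> J u \<and> J hh < J u)" using False uY umax by blast
      show ?thesis
      proof (cases "J u < dc i k")
        case True
        have b: "\<forall>y\<in>C - T. J y \<le> dc i k"
        proof
          fix y assume "y \<in> C - T"
          then have "J y \<le> J u" using umax by blast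
          then show "J y \<le> dc i k" using True by linarith
        qed
        have "J hh < dc i k"
        proof (rule ccontr)
          assume "\<not> J hh < dc i k"
          then obtain y where y: "y \<in> C - T" "J hh < J y" using nc' by force
          then have "J y \<le> J u" using umax by blast
          then show False using y(2) True \<open>\<not> J hh < dc i k\<close> by linarith
        qed
        then show ?thesis using b by blast
      next
        case False
        then have "J u \<le> J hh" using nu by linarith
        then have "\<forall>y\<in>C - T. J y \<le> J hh" using umax by (meson order_trans)
        then have "J hh < dc i k" using nc' by linarith
        then show ?thesis using False \<open>J u \<le> J hh\<close> by linarith
      qed
    qed
    have A': "ainv (r i C) n0 i C (T - {hh}) (Ol i C - {hh})"
      using drop_ainv[OF A hO] ab unfolding J_def k_def by blast
    have cn': "\<forall>\<omega>. cnt (s(i := (s i)(C := T - {hh}))) \<omega> = n0 \<omega> + (if None = Some \<omega> then 1 else 0)"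
    proof
      fix \<omega>
      have e1: "cnt s \<omega> = oth s i \<omega> + (if searched P s i \<omega> then 1 else 0)" using cnt_oth .
      have e3: "cnt (s(i := (s i)(C := T - {hh}))) \<omega> = oth s i \<omega> +
          (if (if \<omega> \<in> C then \<omega> \<in> T - {hh} else searched P s i \<omega>) then 1 else 0)"
        using cnt_upd searched_upd_self[OF CP] by simp
      show "cnt (s(i := (s i)(C := T - {hh}))) \<omega> = n0 \<omega> + (if None = Some \<omega> then 1 else 0)"
      proof (cases "\<omega> \<in> C")
        case True
        then have "searched P s i \<omega> = (\<omega> \<in> T)" using sr by blast
        then show ?thesis using e1 e3 cn[of \<omega>] True hT by (cases "\<omega> = hh"; auto)
      next
        case False
        then have "\<omega> \<noteq> hh" using hT TC by auto
        then show ?thesis using e1 e3 cn[of \<omega>] False by simp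
      qed
    qed
    have "inv r n0 (Ol(i := (Ol i)(C := Ol i C - {hh}))) None (s(i := (s i)(C := T - {hh})))"
      using inv_upd[OF I CP A' cn'] .
    then show ?thesis using mdec by blast
  qed
qed

lemma phase_run:
  "inv r n0 Ol h s \<Longrightarrow> \<exists>s'. eqr r s' \<and> (\<forall>\<omega>. n0 \<omega> \<le> cnt s' \<omega>)"
proof (induction "msr Ol" arbitrary: Ol h s rule: less_induct)
  case less
  have I: "inv r n0 Ol h s" by fact
  have cn: "\<And>\<omega>. cnt s \<omega> = n0 \<omega> + (if h = Some \<omega> then 1 else 0)" using I unfolding inv_def by blast
  show ?case
  proof (cases "\<forall>i. \<forall>C\<in>P i. happy s i C (r i C)")
    case True
    have "eqr r s" unfolding eqr_def
    proof (intro allI ballI)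
      fix i C assume CP: "C \<in> P i"
      have "agent_inv r n0 Ol s i C" using I CP unfolding inv_def by blast
      then show "s i C \<subseteq> C \<and> card (s i C) \<le> r i C \<and> r i C \<le> K i \<and> happy s i C (r i C)"
        using True CP unfolding agent_inv_def by blast
    qed
    moreover have "\<forall>\<omega>. n0 \<omega> \<le> cnt s \<omega>" using cn by simp
    ultimately show ?thesis by blast
  next
    case False
    then obtain i C where CP: "C \<in> P i" and nh: "\<not> happy s i C (r i C)" by blast
    obtain hh where hh: "h = Some hh" "hh \<in> Ol i C"
      and nc: "\<not> ((\<forall>y\<in>C - s i C. val i y (n0 y + 1) \<le> val i hh (n0 hh + 1)) \<and> dc i (card (s i C)) \<le> val i hh (n0 hh + 1))"
      using happy_crit[OF I CP] nh by blast
    obtain Ol' h' s' where I': "inv r n0 Ol' h' s'" and lt: "msr Ol' < msr Ol"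
      using step[OF I[unfolded hh(1)] CP hh(2) nc] by blast
    show ?thesis using less.hyps[OF lt I'] .
  qed
qed

end



context sg
begin

lemma eqr_ainv:
  assumes E: "eqr r s" and CP: "C \<in> P i"
  shows "ainv (r i C) (cnt s) i C (s i C) (s i C)"
proof -
  have TC: "s i C \<subseteq> C" and ck: "card (s i C) \<le> r i C" and rK: "r i C \<le> K i" and H: "happy s i C (r i C)"
    using E CP unfolding eqr_def by blast+
  have ox: "oth s i x + 1 = cnt s x" if "x \<in> s i C" for x
    using cnt_oth[of s x i] searched_in[OF CP, of x s] that TC by auto
  have oy: "oth s i y = cnt s y" if "y \<in> C - s i C" for y
    using cnt_oth[of s y i] searched_in[OF CP, of y s] that by auto
  have E1: "\<forall>x\<in>s i C. \<forall>y\<in>C - s i C. val i y (oth s i y + 1) \<le> val i x (oth s i x + 1)"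
    and E2: "card (s i C) < r i C \<longrightarrow> (\<forall>y\<in>C - s i C. val i y (oth s i y + 1) \<le> dc i (card (s i C) + 1))"
    and E3: "\<forall>x\<in>s i C. dc i (card (s i C)) \<le> val i x (oth s i x + 1)"
    using H unfolding happy_def by blast+
  show ?thesis unfolding ainv_def
  proof (intro conjI)
    show "\<forall>x\<in>s i C. \<forall>y\<in>C - s i C. val i y (cnt s y + 1) \<le> val i x (cnt s x)"
      using E1 ox oy by simp
    show "\<forall>x\<in>s i C. dc i (card (s i C)) \<le> val i x (cnt s x)" using E3 ox by simp
    show "card (s i C) < r i C \<longrightarrow> (\<forall>y\<in>C - s i C. val i y (cnt s y + 1) \<le> dc i (card (s i C) + 1))"
      using E2 oy by simp
  qed (use TC ck rK in auto)
qed

lemma phase_start: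
  assumes E: "eqr r s" and CP: "C0 \<in> P a" and lt: "r a C0 < K a"
  shows "\<exists>s'. eqr (r(a := (r a)(C0 := Suc (r a C0)))) s' \<and> (\<forall>\<omega>. cnt s \<omega> \<le> cnt s' \<omega>)"
proof -
  define r' where "r' = r(a := (r a)(C0 := Suc (r a C0)))"
  define n0 where "n0 = cnt s"
  define T where "T = s a C0"
  define k where "k = card T"
  define J where "J y = val a y (n0 y + 1)" for y
  have A: "ainv (r a C0) n0 a C0 T T" using eqr_ainv[OF E CP] unfolding n0_def T_def .
  have TC: "T \<subseteq> C0" and ck: "k \<le> r a C0"
    and I1: "\<forall>x\<in>T. \<forall>y\<in>C0 - T. val a y (n0 y + 1) \<le> val a x (n0 x)"
    and I3: "\<forall>x\<in>T. dc a k \<le> val a x (n0 x)"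
    and I4: "k < r a C0 \<longrightarrow> (\<forall>y\<in>C0 - T. val a y (n0 y + 1) \<le> dc a (k + 1))"
    using A unfolding ainv_def k_def by auto
  have others: "agent_inv r' n0 s s j C" if "C \<in> P j" "\<not> (j = a \<and> C = C0)" for j C
  proof -
    have "ainv (r j C) n0 j C (s j C) (s j C)" using eqr_ainv[OF E that(1)] unfolding n0_def .
    moreover have "r' j C = r j C" using that(2) unfolding r'_def by auto
    ultimately show ?thesis unfolding agent_inv_ainv by simp
  qed
  have r'a: "r' a C0 = Suc (r a C0)" unfolding r'_def by simp
  show ?thesis
  proof (cases "k < r a C0 \<or> (\<forall>y\<in>C0 - T. J y \<le> dc a (k + 1))")
    case True
    have I4': "card T < Suc (r a C0) \<longrightarrow> (\<forall>y\<in>C0 - T. val a y (n0 y + 1) \<le> dc a (card T + 1))"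
      using True I4 unfolding J_def k_def by auto
    have "ainv (r' a C0) n0 a C0 T T"
      unfolding r'a ainv_def using TC ck lt I1 I3 I4' unfolding k_def by auto
    then have ia: "agent_inv r' n0 s s a C0" unfolding agent_inv_ainv T_def .
    have "inv r' n0 s None s" unfolding inv_def n0_def
      using ia others unfolding n0_def by auto
    then obtain s' where "eqr r' s'" "\<forall>\<omega>. n0 \<omega> \<le> cnt s' \<omega>" using phase_run by blast
    then show ?thesis unfolding r'_def n0_def by blast
  next
    case False
    then have kr: "k = r a C0" and ex: "\<exists>y\<in>C0 - T. dc a (k + 1) < J y" using ck by (auto simp: not_le)
    then have ne: "C0 - T \<noteq> {}" by blast
    have "finite (J ` (C0 - T))" by simp
    then obtain u where uY: "u \<in> C0 - T" and umax: "\<forall>y\<in>C0 - T. J y \<le> J u"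
      using ne Max_in[of "J ` (C0 - T)"] Max_ge[of "J ` (C0 - T)"] by (metis (no_types, lifting) image_iff image_is_empty)
    have du: "dc a (k + 1) < J u"
    proof -
      obtain y where "y \<in> C0 - T" "dc a (k + 1) < J y" using ex by blast
      moreover then have "J y \<le> J u" using umax by blast
      ultimately show ?thesis by linarith
    qed
    have nsu: "\<not> searched P s a u" using searched_in[OF CP, of u s] uY unfolding T_def by blast
    have nu: "n0 u < card (UNIV :: 'p set)"
    proof -
      have "cnt s u = oth s a u" using cnt_oth[of s u a] nsu by simp
      then show ?thesis using oth_le[of s a u] N_pos unfolding n0_def by linarith
    qed
    have cT: "card (insert u T) = k + 1" using uY unfolding k_def by simp
    have A': "ainv (r' a C0) n0 a C0 (insert u T) T"
      unfolding r'a ainv_def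
    proof (intro conjI ballI)
      show "insert u T \<subseteq> C0" using TC uY by blast
      show "card (insert u T) \<le> Suc (r a C0)" using cT kr by simp
      show "Suc (r a C0) \<le> K a" using lt by simp
      show "T \<subseteq> insert u T" by blast
    next
      fix x y assume "x \<in> T" "y \<in> C0 - insert u T"
      then show "val a y (n0 y + 1) \<le> val a x (n0 x)" using I1 by blast
    next
      fix x assume "x \<in> insert u T - T"
      then show "n0 x < card (UNIV :: 'p set)" using nu by blast
    next
      fix x y assume "x \<in> insert u T - T" "y \<in> C0 - insert u T"
      then show "val a y (n0 y + 1) \<le> val a x (n0 x + 1)" using umax unfolding J_def by blast
    next
      fix x assume x: "x \<in> T"
      have "val a u (n0 u + 1) \<le> val a x (n0 x)" using I1 x uY by blast
      then show "dc a (card (insert u T)) \<le> val a x (n0 x)" using du cT unfolding J_def by simp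
    next
      fix x assume "x \<in> insert u T - T"
      then show "dc a (card (insert u T)) \<le> val a x (n0 x + 1)" using du cT unfolding J_def by auto
    next
      show "card (insert u T) < Suc (r a C0) \<longrightarrow> (\<forall>y\<in>C0 - insert u T. val a y (n0 y + 1) \<le> dc a (card (insert u T) + 1))"
        using cT kr by simp
    qed
    define s' where "s' = s(a := (s a)(C0 := insert u T))"
    have cn': "cnt s' \<omega> = n0 \<omega> + (if Some u = Some \<omega> then 1 else 0)" for \<omega>
    proof -
      have e1: "cnt s \<omega> = oth s a \<omega> + (if searched P s a \<omega> then 1 else 0)" using cnt_oth .
      have e3: "cnt s' \<omega> = oth s a \<omega> + (if (if \<omega> \<in> C0 then \<omega> \<in> insert u T else searched P s a \<omega>) then 1 else 0)"
        unfolding s'_def using cnt_upd searched_upd_self[OF CP] by simp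
      show ?thesis
      proof (cases "\<omega> \<in> C0")
        case True
        then have "searched P s a \<omega> = (\<omega> \<in> T)" using searched_in[OF CP] unfolding T_def by blast
        then show ?thesis using e1 e3 True uY unfolding n0_def by (cases "\<omega> = u"; auto)
      next
        case False
        then have "\<omega> \<noteq> u" using uY by auto
        then show ?thesis using e1 e3 False unfolding n0_def by simp
      qed
    qed
    have "inv r' n0 s (Some u) s'" unfolding inv_def
    proof (intro conjI allI ballI)
      fix \<omega> show "cnt s' \<omega> = n0 \<omega> + (if Some u = Some \<omega> then 1 else 0)" using cn' .
    next
      fix j C assume CPj: "C \<in> P j"
      show "agent_inv r' n0 s s' j C"
      proof (cases "j = a \<and> C = C0")
        case True then show ?thesis using A' unfolding agent_inv_ainv s'_def T_def by simp
      next
        case False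
        then have "agent_inv r' n0 s s j C" using others CPj by blast
        then show ?thesis using False unfolding agent_inv_ainv s'_def by auto
      qed
    qed
    then obtain s'' where "eqr r' s''" "\<forall>\<omega>. n0 \<omega> \<le> cnt s'' \<omega>" using phase_run by blast
    then show ?thesis unfolding r'_def n0_def by blast
  qed
qed

definition gap :: "('p \<Rightarrow> 'w set \<Rightarrow> nat) \<Rightarrow> nat" where
  "gap r = (\<Sum>i\<in>UNIV. \<Sum>C\<in>P i. (K i - r i C))"

lemma full:
  "eqr r s \<Longrightarrow> \<exists>r' s'. eqr r' s' \<and> (\<forall>i. \<forall>C\<in>P i. r' i C = K i) \<and> (\<forall>\<omega>. cnt s \<omega> \<le> cnt s' \<omega>)"
proof (induction "gap r" arbitrary: r s rule: less_induct)
  case less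
  show ?case
  proof (cases "\<forall>i. \<forall>C\<in>P i. r i C = K i")
    case True then show ?thesis using less.prems by blast
  next
    case False
    then obtain a C0 where CP: "C0 \<in> P a" and ne: "r a C0 \<noteq> K a" by blast
    have "r a C0 \<le> K a" using less.prems CP unfolding eqr_def by blast
    then have lt: "r a C0 < K a" using ne by simp
    obtain s' where E': "eqr (r(a := (r a)(C0 := Suc (r a C0)))) s'" and mono: "\<forall>\<omega>. cnt s \<omega> \<le> cnt s' \<omega>"
      using phase_start[OF less.prems CP lt] by blast
    let ?r' = "r(a := (r a)(C0 := Suc (r a C0)))"
    have "gap ?r' < gap r" unfolding gap_def
    proof (rule sum_strict_mono_ex1)
      show "finite (UNIV :: 'p set)" by simp
      have inner: "(\<Sum>C\<in>P a. K a - ?r' a C) < (\<Sum>C\<in>P a. K a - r a C)"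
      proof (rule sum_strict_mono_ex1)
        show "finite (P a)" by simp
        show "\<forall>x\<in>P a. K a - ?r' a x \<le> K a - r a x" by auto
        show "\<exists>x\<in>P a. K a - ?r' a x < K a - r a x" using CP lt by auto
      qed
      show "\<forall>j\<in>UNIV. (\<Sum>C\<in>P j. K j - ?r' j C) \<le> (\<Sum>C\<in>P j. K j - r j C)"
        using inner by (auto intro: less_imp_le)
      show "\<exists>j\<in>UNIV. (\<Sum>C\<in>P j. K j - ?r' j C) < (\<Sum>C\<in>P j. K j - r j C)"
        using inner by blast
    qed
    then obtain r'' s'' where "eqr r'' s''" "\<forall>i. \<forall>C\<in>P i. r'' i C = K i" "\<forall>\<omega>. cnt s' \<omega> \<le> cnt s'' \<omega>"
      using less.hyps E' by blast
    then show ?thesis using mono by (meson order_trans)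
  qed
qed

end



lemma ex_max_on:
  fixes f :: "'a \<Rightarrow> 'b::linorder"
  assumes "finite S" "S \<noteq> {}"
  shows "\<exists>x\<in>S. \<forall>y\<in>S. f y \<le> f x"
proof -
  have "Max (f ` S) \<in> f ` S" using assms by simp
  then obtain x where x: "x \<in> S" "f x = Max (f ` S)" by auto
  have "\<forall>y\<in>S. f y \<le> f x" using x assms by simp
  then show ?thesis using x by blast
qed

context sg
begin

lemma eqr_profile: "eqr r s \<Longrightarrow> s \<in> pure_profiles P K"
  unfolding eqr_def pure_profiles_def pure_strategy_def using le_trans by blast

lemma pay_decomp:
  assumes tC: "\<forall>C\<in>P i. t C \<subseteq> C"
  shows "payoff P \<mu> c v (s(i := t)) i =
    (\<Sum>C\<in>P i. sum \<mu> C * (\<Sum>\<omega>\<in>t C. val i \<omega> (oth s i \<omega> + 1)) - sum \<mu> C * c i (card (t C)))"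
proof -
  define g where "g \<omega> = \<mu> \<omega> * ((if \<omega> \<in> t (cell (P i) \<omega>) then v i (oth s i \<omega> + 1) \<omega> else 0) - c i (card (t (cell (P i) \<omega>))))" for \<omega>
  have pg: "payoff P \<mu> c v (s(i := t)) i = sum g UNIV"
    unfolding payoff_def g_def
  proof (rule sum.cong[OF refl])
    fix \<omega>
    have sr: "searched P (s(i := t)) i \<omega> = (\<omega> \<in> t (cell (P i) \<omega>))" unfolding searched_def by simp
    have cn: "searched P (s(i := t)) i \<omega> \<Longrightarrow> num_searchers P (s(i := t)) \<omega> = oth s i \<omega> + 1"
      using cnt_upd[of s i t \<omega>] by simp
    show "\<mu> \<omega> * ((if searched P (s(i := t)) i \<omega> then v i (num_searchers P (s(i := t)) \<omega>) \<omega> else 0) -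
          c i (card ((s(i := t)) i (cell (P i) \<omega>)))) =
          \<mu> \<omega> * ((if \<omega> \<in> t (cell (P i) \<omega>) then v i (oth s i \<omega> + 1) \<omega> else 0) - c i (card (t (cell (P i) \<omega>))))"
      using sr cn by simp
  qed
  have U: "\<Union>(P i) = (UNIV :: 'w set)" using partition_onD1[OF part] by simp
  have D: "\<forall>A\<in>P i. \<forall>B\<in>P i. A \<noteq> B \<longrightarrow> A \<inter> B = {}"
    using partition_onD2[OF part] unfolding disjoint_def by blast
  have "sum g UNIV = sum g (\<Union>(P i))" using U by simp
  also have "\<dots> = (\<Sum>C\<in>P i. sum g C)" using sum.Union_disjoint[of "P i" g] D by simp
  also have "\<dots> = (\<Sum>C\<in>P i. sum \<mu> C * (\<Sum>\<omega>\<in>t C. val i \<omega> (oth s i \<omega> + 1)) - sum \<mu> C * c i (card (t C)))"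
  proof (rule sum.cong[OF refl])
    fix C assume CP: "C \<in> P i"
    have cl: "\<And>\<omega>. \<omega> \<in> C \<Longrightarrow> cell (P i) \<omega> = C" using cell_unique[OF CP] .
    have pos: "sum \<mu> C > 0" using cell_pos[OF CP] .
    have "sum g C = (\<Sum>\<omega>\<in>C. (if \<omega> \<in> t C then \<mu> \<omega> * v i (oth s i \<omega> + 1) \<omega> else 0) - \<mu> \<omega> * c i (card (t C)))"
      unfolding g_def by (rule sum.cong[OF refl]) (simp add: cl right_diff_distrib)
    also have "\<dots> = (\<Sum>\<omega>\<in>C. (if \<omega> \<in> t C then \<mu> \<omega> * v i (oth s i \<omega> + 1) \<omega> else 0)) - sum \<mu> C * c i (card (t C))"
      by (simp add: sum_subtractf sum_distrib_right)
    also have "(\<Sum>\<omega>\<in>C. (if \<omega> \<in> t C then \<mu> \<omega> * v i (oth s i \<omega> + 1) \<omega> else 0)) = (\<Sum>\<omega>\<in>t C. \<mu> \<omega> * v i (oth s i \<omega> + 1) \<omega>)"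
      using sum.inter_restrict[of C "\<lambda>\<omega>. \<mu> \<omega> * v i (oth s i \<omega> + 1) \<omega>" "t C"] tC CP
      by (simp add: Int_absorb1)
    also have "\<dots> = (\<Sum>\<omega>\<in>t C. sum \<mu> C * val i \<omega> (oth s i \<omega> + 1))"
    proof (rule sum.cong[OF refl])
      fix \<omega> assume "\<omega> \<in> t C"
      then have "\<omega> \<in> C" using tC CP by blast
      then show "\<mu> \<omega> * v i (oth s i \<omega> + 1) \<omega> = sum \<mu> C * val i \<omega> (oth s i \<omega> + 1)"
        unfolding val_def cond_prob_def using cl pos by simp
    qed
    also have "\<dots> = sum \<mu> C * (\<Sum>\<omega>\<in>t C. val i \<omega> (oth s i \<omega> + 1))" by (simp add: sum_distrib_left)
    finally show "sum g C = sum \<mu> C * (\<Sum>\<omega>\<in>t C. val i \<omega> (oth s i \<omega> + 1)) - sum \<mu> C * c i (card (t C))" .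
  qed
  finally show ?thesis using pg by simp
qed

lemma eqr_nash:
  assumes E: "eqr r s" and rK: "\<forall>i. \<forall>C\<in>P i. r i C = K i"
  shows "pure_nash P \<mu> K c v s"
  unfolding pure_nash_def
proof (intro conjI allI impI)
  show "s \<in> pure_profiles P K" using eqr_profile[OF E] .
next
  fix i t assume ps: "pure_strategy (P i) (K i) t"
  have tC: "\<forall>C\<in>P i. t C \<subseteq> C" and tK: "\<forall>C\<in>P i. card (t C) \<le> K i"
    using ps unfolding pure_strategy_def by blast+
  have sC: "\<forall>C\<in>P i. s i C \<subseteq> C" using E unfolding eqr_def by blast
  have "payoff P \<mu> c v (s(i := t)) i =
    (\<Sum>C\<in>P i. sum \<mu> C * (\<Sum>\<omega>\<in>t C. val i \<omega> (oth s i \<omega> + 1)) - sum \<mu> C * c i (card (t C)))"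
    using pay_decomp[OF tC] .
  also have "\<dots> \<le> (\<Sum>C\<in>P i. sum \<mu> C * (\<Sum>\<omega>\<in>s i C. val i \<omega> (oth s i \<omega> + 1)) - sum \<mu> C * c i (card (s i C)))"
  proof (rule sum_mono)
    fix C assume CP: "C \<in> P i"
    have TC: "s i C \<subseteq> C" and TK: "card (s i C) \<le> K i" and H: "happy s i C (K i)"
      using E CP rK unfolding eqr_def by (metis)+
    have E1: "\<forall>x\<in>s i C. \<forall>y\<in>C - s i C. val i y (oth s i y + 1) \<le> val i x (oth s i x + 1)"
      and E2: "card (s i C) < K i \<longrightarrow> (\<forall>y\<in>C - s i C. val i y (oth s i y + 1) \<le> dc i (card (s i C) + 1))"
      and E3: "\<forall>x\<in>s i C. dc i (card (s i C)) \<le> val i x (oth s i x + 1)"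
      using H unfolding happy_def by blast+
    have br: "(\<Sum>\<omega>\<in>t C. val i \<omega> (oth s i \<omega> + 1)) - c i (card (t C)) \<le> (\<Sum>\<omega>\<in>s i C. val i \<omega> (oth s i \<omega> + 1)) - c i (card (s i C))"
    proof (rule best_resp[OF conv[of i]])
      show "finite C" by simp
      show "s i C \<subseteq> C" using TC .
      show "card (s i C) \<le> K i" using TK .
      show "\<forall>x\<in>s i C. \<forall>y\<in>C - s i C. val i y (oth s i y + 1) \<le> val i x (oth s i x + 1)" using E1 .
      show "card (s i C) < K i \<longrightarrow> (\<forall>y\<in>C - s i C. val i y (oth s i y + 1) \<le> c i (card (s i C) + 1) - c i (card (s i C)))"
        using E2 unfolding dc_def by simp
      show "\<forall>x\<in>s i C. c i (card (s i C)) - c i (card (s i C) - 1) \<le> val i x (oth s i x + 1)"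
        using E3 unfolding dc_def by simp
      show "t C \<subseteq> C" using tC CP by blast
      show "card (t C) \<le> K i" using tK CP by blast
    qed
    have "0 \<le> sum \<mu> C" using cell_pos[OF CP] by simp
    then have "sum \<mu> C * ((\<Sum>\<omega>\<in>t C. val i \<omega> (oth s i \<omega> + 1)) - c i (card (t C))) \<le>
               sum \<mu> C * ((\<Sum>\<omega>\<in>s i C. val i \<omega> (oth s i \<omega> + 1)) - c i (card (s i C)))"
      using br by (rule mult_left_mono[rotated])
    then show "sum \<mu> C * (\<Sum>\<omega>\<in>t C. val i \<omega> (oth s i \<omega> + 1)) - sum \<mu> C * c i (card (t C))
         \<le> sum \<mu> C * (\<Sum>\<omega>\<in>s i C. val i \<omega> (oth s i \<omega> + 1)) - sum \<mu> C * c i (card (s i C))"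
      by (simp only: right_diff_distrib)
  qed
  also have "\<dots> = payoff P \<mu> c v s i" using pay_decomp[OF sC, of s] by simp
  finally show "payoff P \<mu> c v (s(i := t)) i \<le> payoff P \<mu> c v s i" .
qed

end



lemma card_ins_del:
  assumes "finite A" "x \<in> A" "y \<notin> A"
  shows "card (insert y (A - {x})) = card A"
proof -
  have "y \<notin> A - {x}" using assms by blast
  then have "card (insert y (A - {x})) = Suc (card (A - {x}))" using assms by simp
  moreover have "card (A - {x}) = card A - 1" using card_Diff_singleton[OF assms(2)] .
  moreover have "card A > 0" using assms card_gt_0_iff by blast
  ultimately show ?thesis by simp
qed

context sg
begin

lemma ssd_facts:
  assumes CP: "C \<in> P i" and x: "x \<in> C" and y: "y \<in> C"
  shows "val i y 2 \<le> val i x 1" and "dc i (K i) \<le> val i x 1"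
proof -
  have "cond_prob \<mu> C x * v i 1 x \<ge> cond_prob \<mu> C y * v i 2 y \<and>
        cond_prob \<mu> C x * v i 1 x \<ge> c i (K i) - c i (K i - 1)"
    using ssd CP x y unfolding solitary_search_dominant_def by blast
  moreover have "cell (P i) x = C" "cell (P i) y = C" using cell_unique[OF CP] x y by auto
  ultimately show "val i y 2 \<le> val i x 1" "dc i (K i) \<le> val i x 1"
    unfolding val_def dc_def by auto
qed

definition cov :: "('p \<Rightarrow> 'w set \<Rightarrow> 'w set) \<Rightarrow> nat" where
  "cov s = card {\<omega>. num_searchers P s \<omega> \<ge> 1}"

definition Phi :: "('p \<Rightarrow> 'w set \<Rightarrow> 'w set) \<Rightarrow> real" where
  "Phi s = (\<Sum>j\<in>UNIV. \<Sum>\<omega>\<in>UNIV. (if searched P s j \<omega> then val j \<omega> 1 else 0))"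

lemma lm_iff: "location_maximizing P K s \<longleftrightarrow> s \<in> pure_profiles P K \<and> (\<forall>s'\<in>pure_profiles P K. cov s' \<le> cov s)"
  unfolding location_maximizing_def cov_def by simp

lemma cnt_pos_iff: "1 \<le> cnt s \<omega> \<longleftrightarrow> (\<exists>j. searched P s j \<omega>)"
  unfolding num_searchers_def by (auto simp: Suc_le_eq card_gt_0_iff)

lemma exists_lm: "\<exists>s. location_maximizing P K s \<and> (\<forall>\<omega>. cnt s \<omega> \<le> 1)"
proof -
  have fin: "finite (pure_profiles P K)" by simp
  have ne: "(\<lambda>i C. {}) \<in> pure_profiles P K" unfolding pure_profiles_def pure_strategy_def by simp
  obtain s where sS: "s \<in> pure_profiles P K" and smax: "\<forall>s'\<in>pure_profiles P K. cov s' \<le> cov s"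
    using ex_max_on[OF fin, of cov] ne by blast
  define g where "g \<omega> = (SOME j. searched P s j \<omega>)" for \<omega>
  define s1 where "s1 i C = {\<omega> \<in> s i C. g \<omega> = i}" for i C
  have sr1: "searched P s1 j \<omega> \<longleftrightarrow> searched P s j \<omega> \<and> g \<omega> = j" for j \<omega>
    unfolding searched_def s1_def by simp
  have c1: "cnt s1 \<omega> \<le> 1" for \<omega>
  proof -
    have "{j. searched P s1 j \<omega>} \<subseteq> {g \<omega>}" by (auto simp: sr1)
    then have "card {j. searched P s1 j \<omega>} \<le> card {g \<omega>}" by (intro card_mono) auto
    then show ?thesis unfolding num_searchers_def by simp
  qed
  have same: "(1 \<le> cnt s1 \<omega>) = (1 \<le> cnt s \<omega>)" for \<omega>
  proof -
    have "(\<exists>j. searched P s1 j \<omega>) = (\<exists>j. searched P s j \<omega>)"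
      using sr1 unfolding g_def by (metis (mono_tags, lifting) someI_ex)
    then show ?thesis using cnt_pos_iff by simp
  qed
  have s1S: "s1 \<in> pure_profiles P K"
    using sS unfolding pure_profiles_def pure_strategy_def s1_def
  proof (intro CollectI allI ballI conjI)
    fix i C assume a: "s \<in> {s. \<forall>i. \<forall>C\<in>P i. s i C \<subseteq> C \<and> card (s i C) \<le> K i}" and CP: "C \<in> P i"
    then have "s i C \<subseteq> C" "card (s i C) \<le> K i" by auto
    moreover have "card {\<omega> \<in> s i C. g \<omega> = i} \<le> card (s i C)" by (intro card_mono) auto
    ultimately show "{\<omega> \<in> s i C. g \<omega> = i} \<subseteq> C" "card {\<omega> \<in> s i C. g \<omega> = i} \<le> K i" by auto
  qed
  have "cov s1 = cov s" unfolding cov_def using same by simp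
  then have "location_maximizing P K s1" unfolding lm_iff using s1S smax by simp
  then show ?thesis using c1 by blast
qed

lemma init:
  "\<exists>s0. eqr (\<lambda>i C. card (s0 i C)) s0 \<and> location_maximizing P K s0"
proof -
  define S1 where "S1 = {s. location_maximizing P K s \<and> (\<forall>\<omega>. cnt s \<omega> \<le> 1)}"
  have fin: "finite S1" by simp
  have ne: "S1 \<noteq> {}" using exists_lm unfolding S1_def by blast
  obtain s0 where s0S: "s0 \<in> S1" and s0max: "\<forall>s\<in>S1. Phi s \<le> Phi s0"
    using ex_max_on[OF fin ne, of Phi] by blast
  have lm0: "location_maximizing P K s0" and c0: "\<forall>\<omega>. cnt s0 \<omega> \<le> 1" using s0S unfolding S1_def by auto
  have S0: "s0 \<in> pure_profiles P K" and m0: "\<forall>s'\<in>pure_profiles P K. cov s' \<le> cov s0"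
    using lm0 unfolding lm_iff by auto
  have swap: "val i y 1 \<le> val i x 1"
    if CP: "C \<in> P i" and x: "x \<in> s0 i C" and y: "y \<in> C - s0 i C" and y0: "cnt s0 y = 0" for i C x y
  proof (rule ccontr)
    assume "\<not> val i y 1 \<le> val i x 1"
    then have gt: "val i x 1 < val i y 1" by simp
    define T where "T = s0 i C"
    have TC: "T \<subseteq> C" and TK: "card T \<le> K i" using S0 CP unfolding pure_profiles_def pure_strategy_def T_def by auto
    have xC: "x \<in> C" using x TC unfolding T_def by blast
    have xy: "x \<noteq> y" using x y by blast
    define s2 where "s2 = s0(i := (s0 i)(C := insert y (T - {x})))"
    have sr0: "searched P s0 i \<omega> = (if \<omega> \<in> C then \<omega> \<in> T else searched P s0 i \<omega>)" for \<omega>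
      using searched_in[OF CP, of \<omega> s0] unfolding T_def by simp
    have sr2: "searched P s2 i \<omega> = ((searched P s0 i \<omega> \<and> \<omega> \<noteq> x) \<or> \<omega> = y)" for \<omega>
      unfolding s2_def searched_upd_self[OF CP] using sr0[of \<omega>] xC y by auto
    have sr2o: "j \<noteq> i \<Longrightarrow> searched P s2 j \<omega> = searched P s0 j \<omega>" for j \<omega>
      unfolding s2_def using searched_upd_other by blast
    have sx: "searched P s0 i x" using searched_in[OF CP] x xC by blast
    have sy: "\<not> searched P s0 i y" using searched_in[OF CP, of y s0] y by blast
    have ox: "oth s0 i x = 0" using cnt_oth[of s0 x i] c0[rule_format, of x] sx by simp
    have oy: "oth s0 i y = 0" using cnt_oth[of s0 y i] y0 by simp
    have cn2: "cnt s2 \<omega> = oth s0 i \<omega> + (if searched P s2 i \<omega> then 1 else 0)" for \<omega>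
      unfolding s2_def using cnt_upd by blast
    have cn0: "cnt s0 \<omega> = oth s0 i \<omega> + (if searched P s0 i \<omega> then 1 else 0)" for \<omega>
      using cnt_oth .
    have c2: "cnt s2 \<omega> \<le> 1" for \<omega>
      using cn2[of \<omega>] cn0[of \<omega>] c0[rule_format, of \<omega>] sr2[of \<omega>] ox oy xy by (cases "\<omega> = x"; cases "\<omega> = y"; auto)
    have covset: "{\<omega>. cnt s2 \<omega> \<ge> 1} = insert y ({\<omega>. cnt s0 \<omega> \<ge> 1} - {x})"
    proof (rule set_eqI)
      fix \<omega>
      show "\<omega> \<in> {\<omega>. cnt s2 \<omega> \<ge> 1} \<longleftrightarrow> \<omega> \<in> insert y ({\<omega>. cnt s0 \<omega> \<ge> 1} - {x})"
        using cn2[of \<omega>] cn0[of \<omega>] sr2[of \<omega>] ox oy xy by (cases "\<omega> = x"; cases "\<omega> = y"; auto)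
    qed
    have xin: "x \<in> {\<omega>. cnt s0 \<omega> \<ge> 1}" using cn0[of x] sx by simp
    have yn: "y \<notin> {\<omega>. cnt s0 \<omega> \<ge> 1}" using y0 by simp
    have "cov s2 = cov s0"
      unfolding cov_def covset using card_ins_del[OF _ xin yn] by simp
    moreover have S2: "s2 \<in> pure_profiles P K"
      unfolding pure_profiles_def pure_strategy_def
    proof (intro CollectI allI ballI)
      fix j C' assume CP': "C' \<in> P j"
      show "s2 j C' \<subseteq> C' \<and> card (s2 j C') \<le> K j"
      proof (cases "j = i \<and> C' = C")
        case True
        have "card (insert y (T - {x})) = card T"
          using card_ins_del[of T x y, OF finite_C] y x unfolding T_def by blast
        then show ?thesis using True TC TK xC y unfolding s2_def by auto
      next
        case False
        then have "s2 j C' = s0 j C'" unfolding s2_def by auto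
        then show ?thesis using S0 CP' unfolding pure_profiles_def pure_strategy_def by auto
      qed
    qed
    ultimately have "location_maximizing P K s2" unfolding lm_iff using m0 by simp
    then have "s2 \<in> S1" unfolding S1_def using c2 by blast
    then have le: "Phi s2 \<le> Phi s0" using s0max by blast
    have inner: "(\<Sum>\<omega>\<in>UNIV. (if searched P s2 i \<omega> then val i \<omega> 1 else 0)) =
        (\<Sum>\<omega>\<in>UNIV. (if searched P s0 i \<omega> then val i \<omega> 1 else 0)) + (val i y 1 - val i x 1)"
    proof -
      have pw: "(if searched P s2 i \<omega> then val i \<omega> 1 else 0) =
          (if searched P s0 i \<omega> then val i \<omega> 1 else 0) + ((if \<omega> = y then val i y 1 else 0) - (if \<omega> = x then val i x 1 else 0))" for \<omega>
        using sr2[of \<omega>] sx sy xy by (cases "\<omega> = x"; cases "\<omega> = y"; auto)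
      show ?thesis unfolding pw sum.distrib sum_subtractf by simp
    qed
    have "Phi s2 = Phi s0 + (val i y 1 - val i x 1)"
    proof -
      have pw: "(\<Sum>\<omega>\<in>UNIV. (if searched P s2 j \<omega> then val j \<omega> 1 else 0)) =
          (\<Sum>\<omega>\<in>UNIV. (if searched P s0 j \<omega> then val j \<omega> 1 else 0)) + (if j = i then val i y 1 - val i x 1 else 0)" for j
        using inner sr2o by (cases "j = i") auto
      show ?thesis unfolding Phi_def pw sum.distrib by simp
    qed
    then show False using le gt by simp
  qed
  have "eqr (\<lambda>i C. card (s0 i C)) s0" unfolding eqr_def
  proof (intro allI ballI conjI)
    fix i C assume CP: "C \<in> P i"
    show TC: "s0 i C \<subseteq> C" and TK: "card (s0 i C) \<le> K i" using S0 CP unfolding pure_profiles_def pure_strategy_def by auto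
    show "card (s0 i C) \<le> card (s0 i C)" by simp
    have ox: "oth s0 i x + 1 = 1" if "x \<in> s0 i C" for x
    proof -
      have "searched P s0 i x" using searched_in[OF CP] that TC by blast
      then show ?thesis using cnt_oth[of s0 x i] c0[rule_format, of x] by simp
    qed
    have oy: "oth s0 i y = cnt s0 y" if "y \<in> C - s0 i C" for y
    proof -
      have "\<not> searched P s0 i y" using searched_in[OF CP, of y s0] that by blast
      then show ?thesis using cnt_oth[of s0 y i] by simp
    qed
    show "happy s0 i C (card (s0 i C))" unfolding happy_def
    proof (intro conjI ballI impI)
      fix x y assume x: "x \<in> s0 i C" and y: "y \<in> C - s0 i C"
      have "cnt s0 y = 0 \<or> cnt s0 y = 1" using c0 by (metis le_neq_implies_less less_one)
      then show "val i y (oth s0 i y + 1) \<le> val i x (oth s0 i x + 1)"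
      proof
        assume "cnt s0 y = 0"
        then show ?thesis using swap[OF CP x y] ox[OF x] oy[OF y] by simp
      next
        assume "cnt s0 y = 1"
        then have "oth s0 i y + 1 = 2" "oth s0 i x + 1 = 1" using ox[OF x] oy[OF y] by auto
        moreover have "val i y 2 \<le> val i x 1" using ssd_facts(1)[OF CP, of x y] x y TC by blast
        ultimately show ?thesis by (simp add: numeral_2_eq_2)
      qed
    next
      fix y assume "card (s0 i C) < card (s0 i C)" then show "val i y (oth s0 i y + 1) \<le> dc i (card (s0 i C) + 1)" by simp
    next
      fix x assume x: "x \<in> s0 i C"
      have "1 \<le> card (s0 i C)" using x by (simp add: Suc_le_eq card_gt_0_iff) blast
      then have "dc i (card (s0 i C)) \<le> dc i (K i)" using dc_le TK by blast
      moreover have "dc i (K i) \<le> val i x 1" using ssd_facts(2)[OF CP, of x x] x TC by blast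
      ultimately show "dc i (card (s0 i C)) \<le> val i x (oth s0 i x + 1)" using ox[OF x] by simp
    qed
  qed
  then show ?thesis using lm0 by blast
qed

lemma main: "\<exists>s. pure_nash P \<mu> K c v s \<and> location_maximizing P K s"
proof -
  obtain s0 where E0: "eqr (\<lambda>i C. card (s0 i C)) s0" and lm0: "location_maximizing P K s0"
    using init by blast
  obtain r' s' where E: "eqr r' s'" and rK: "\<forall>i. \<forall>C\<in>P i. r' i C = K i"
    and mono: "\<forall>\<omega>. cnt s0 \<omega> \<le> cnt s' \<omega>"
    using full[OF E0] by blast
  have "pure_nash P \<mu> K c v s'" using eqr_nash[OF E rK] .
  moreover have "location_maximizing P K s'"
    unfolding lm_iff
  proof (intro conjI ballI)
    show "s' \<in> pure_profiles P K" using eqr_profile[OF E] .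
    fix s'' assume "s'' \<in> pure_profiles P K"
    then have "cov s'' \<le> cov s0" using lm0 unfolding lm_iff by blast
    also have "cov s0 \<le> cov s'" unfolding cov_def
      by (rule card_mono) (use mono in \<open>auto intro: order_trans\<close>)
    finally show "cov s'' \<le> cov s'" .
  qed
  ultimately show ?thesis by blast
qed

end


theorem corollary2:
  fixes P :: "'p::finite \<Rightarrow> 'w::finite set set"
    and \<mu> :: "'w \<Rightarrow> real" and K :: "'p \<Rightarrow> nat" and c :: "'p \<Rightarrow> nat \<Rightarrow> real"
    and v :: "'p \<Rightarrow> nat \<Rightarrow> 'w \<Rightarrow> real" and vs :: "'w \<Rightarrow> real"
  assumes "search_game P \<mu> K c v vs"
    and "solitary_search_dominant P \<mu> K c v"
  shows "\<exists>s. pure_nash P \<mu> K c v s \<and> location_maximizing P K s"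
proof -
  interpret sg P \<mu> K c v vs using assms by unfold_locales
  show ?thesis using main .
qed

end
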